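(* Let $G$ be a graph, $\mathcal{B}$ a set of balls in $G$, $X\subset V(G)$, $\mathcal{H}$ the set of connected components of $G-X$, and $G'$ an induced subgraph of $G$. Suppose $X\subseteq V(G')$ and, for every $H\in\mathcal{H}$, either (1) $V(H)\subseteq V(G')$, or (2) $V(H)\cap V(G')=\emptyset$ and there exist distinct $H',H''$ with $H'\sim_{\mathcal{B}}H$, $H''\sim_{\mathcal{B}}H$ and $V(H')\cup V(H'')\subseteq V(G')$. Then the set $\mathcal{B}'=\{B_r(u)\cap V(G') : B_r(u)\in\mathcal{B},\ u\in V(G')\}$ is a set of balls in $G'$. Moreover, there is a bijection between the balls in $\mathcal{B}'$ and the balls in $\mathcal{B}$ centered in $V(G')$.
   Context: For a graph $G$, $r\ge 0$ and $v\in V(G)$, the ball $B_r(v)$ is the set of vertices at distance at most $r$ from $v$ (its center). Two components $H,H'\in\mathcal{H}$ are twin-blocks with respect to $\mathcal{B}$, written $H\sim_{\mathcal{B}}H'$, if there is an isomorphism $\alpha$ from $H$ to $H'$ such that (i) for each $u\in V(H)$ and $x\in X$, $ux\in E(G)$ iff $\alpha(u)x\in E(G)$, and (ii) for each $u\in V(H)$ and $r\in\mathbb{N}$, $B_r(u)\in\mathcal{B}$ iff $B_r(\alpha(u))\in\mathcal{B}$. *)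

theory Defs
  imports Main
begin

text \<open>A (finite, simple, undirected) graph: vertex set V and a symmetric,
  irreflexive adjacency relation E. An induced subgraph on a vertex set V' is
  given by the same relation E restricted to V'.\<close>
definition graph :: "'a set \<Rightarrow> ('a \<Rightarrow> 'a \<Rightarrow> bool) \<Rightarrow> bool" where
  "graph V E \<longleftrightarrow> finite V \<and> (\<forall>u v. E u v \<longrightarrow> u \<in> V \<and> v \<in> V)
      \<and> (\<forall>u v. E u v \<longrightarrow> E v u) \<and> (\<forall>u. \<not> E u u)"

definition walk :: "('a \<Rightarrow> 'a \<Rightarrow> bool) \<Rightarrow> 'a set \<Rightarrow> 'a list \<Rightarrow> bool" where
  "walk E V xs \<longleftrightarrow> xs \<noteq> [] \<and> set xs \<subseteq> V
      \<and> (\<forall>i. Suc i < length xs \<longrightarrow> E (xs ! i) (xs ! Suc i))"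

text \<open>Ball of radius r around u in the graph (V, E restricted to V):
  vertices at distance at most r from u.\<close>
definition ball :: "('a \<Rightarrow> 'a \<Rightarrow> bool) \<Rightarrow> 'a set \<Rightarrow> nat \<Rightarrow> 'a \<Rightarrow> 'a set" where
  "ball E V r u = {w. \<exists>xs. walk E V xs \<and> hd xs = u \<and> last xs = w \<and> length xs \<le> Suc r}"

definition is_ball :: "('a \<Rightarrow> 'a \<Rightarrow> bool) \<Rightarrow> 'a set \<Rightarrow> 'a set \<Rightarrow> bool" where
  "is_ball E V S \<longleftrightarrow> (\<exists>u\<in>V. \<exists>r. S = ball E V r u)"

definition components :: "('a \<Rightarrow> 'a \<Rightarrow> bool) \<Rightarrow> 'a set \<Rightarrow> 'a set \<Rightarrow> 'a set set" where
  "components E V X = {C. \<exists>v \<in> V - X. C = {w. \<exists>r. w \<in> ball E (V - X) r v}}"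

definition twin_blocks ::
  "('a \<Rightarrow> 'a \<Rightarrow> bool) \<Rightarrow> 'a set \<Rightarrow> 'a set \<Rightarrow> 'a set set \<Rightarrow> 'a set \<Rightarrow> 'a set \<Rightarrow> bool" where
  "twin_blocks E V X \<B> H H' \<longleftrightarrow> (\<exists>\<alpha>. bij_betw \<alpha> H H'
      \<and> (\<forall>u\<in>H. \<forall>w\<in>H. E u w \<longleftrightarrow> E (\<alpha> u) (\<alpha> w))
      \<and> (\<forall>u\<in>H. \<forall>x\<in>X. E u x \<longleftrightarrow> E (\<alpha> u) x)
      \<and> (\<forall>u\<in>H. \<forall>r. ball E V r u \<in> \<B> \<longleftrightarrow> ball E V r (\<alpha> u) \<in> \<B>))"

end

theory Submission
  imports Defs
begin

definition reach :: "('a \<Rightarrow> 'a \<Rightarrow> bool) \<Rightarrow> 'a set \<Rightarrow> 'a \<Rightarrow> 'a \<Rightarrow> bool" where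
  "reach E W a b \<longleftrightarrow> (\<exists>xs. walk E W xs \<and> hd xs = a \<and> last xs = b)"

lemma walk_Cons:
  "walk E W (a # xs) \<longleftrightarrow> a \<in> W \<and> (xs = [] \<or> (walk E W xs \<and> E a (hd xs)))"
proof
  assume h: "walk E W (a # xs)"
  show "a \<in> W \<and> (xs = [] \<or> (walk E W xs \<and> E a (hd xs)))"
  proof (cases xs)
    case Nil then show ?thesis using h by (simp add: walk_def)
  next
    case (Cons b ys)
    have "\<forall>i. Suc i < length xs \<longrightarrow> E (xs ! i) (xs ! Suc i)"
    proof (intro allI impI)
      fix i assume "Suc i < length xs"
      then have "Suc (Suc i) < length (a # xs)" by simp
      then have "E ((a#xs) ! Suc i) ((a#xs) ! Suc (Suc i))" using h unfolding walk_def by blast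
      then show "E (xs ! i) (xs ! Suc i)" by simp
    qed
    moreover have "E ((a#xs) ! 0) ((a#xs) ! Suc 0)" using h Cons unfolding walk_def by force
    ultimately show ?thesis using h Cons by (simp add: walk_def)
  qed
next
  assume h: "a \<in> W \<and> (xs = [] \<or> (walk E W xs \<and> E a (hd xs)))"
  show "walk E W (a # xs)"
  proof (cases xs)
    case Nil then show ?thesis using h by (simp add: walk_def)
  next
    case (Cons b ys)
    have w: "walk E W xs" "E a b" using h Cons by auto
    have "\<forall>i. Suc i < length (a#xs) \<longrightarrow> E ((a#xs) ! i) ((a#xs) ! Suc i)"
    proof (intro allI impI)
      fix i assume i: "Suc i < length (a#xs)"
      show "E ((a#xs) ! i) ((a#xs) ! Suc i)"
      proof (cases i)
        case 0 then show ?thesis using w Cons by simp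
      next
        case (Suc j)
        then show ?thesis using w(1) i unfolding walk_def by simp
      qed
    qed
    then show ?thesis using h w unfolding walk_def by auto
  qed
qed

lemma walk_snoc:
  assumes "walk E W xs" "E (last xs) c" "c \<in> W"
  shows "walk E W (xs @ [c])"
  using assms
proof (induction xs)
  case Nil then show ?case by (simp add: walk_def)
next
  case (Cons a ys)
  show ?case
  proof (cases ys)
    case Nil then show ?thesis using Cons.prems by (simp add: walk_Cons)
  next
    case (Cons b zs)
    then have "walk E W ys" "E a (hd ys)" "a \<in> W" using Cons.prems(1) by (auto simp: walk_Cons)
    moreover have "E (last ys) c" using Cons.prems(2) \<open>ys = b # zs\<close> by simp
    ultimately show ?thesis using Cons.IH Cons.prems(3) \<open>ys = b # zs\<close> by (simp add: walk_Cons)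
  qed
qed

lemma walk_last_in: "walk E W xs \<Longrightarrow> last xs \<in> W"
  unfolding walk_def by auto

lemma walk_hd_in: "walk E W xs \<Longrightarrow> hd xs \<in> W"
  unfolding walk_def by auto

lemma reach_refl: "a \<in> W \<Longrightarrow> reach E W a a"
  unfolding reach_def by (rule exI[of _ "[a]"]) (simp add: walk_def)

lemma reach_step: "reach E W a b \<Longrightarrow> E b c \<Longrightarrow> c \<in> W \<Longrightarrow> reach E W a c"
  unfolding reach_def
proof -
  assume "\<exists>xs. walk E W xs \<and> hd xs = a \<and> last xs = b" "E b c" "c \<in> W"
  then obtain xs where "walk E W xs" "hd xs = a" "last xs = b" by blast
  moreover have "xs \<noteq> []" using \<open>walk E W xs\<close> by (simp add: walk_def)
  ultimately show "\<exists>xs. walk E W xs \<and> hd xs = a \<and> last xs = c"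
    using \<open>E b c\<close> \<open>c \<in> W\<close> by (intro exI[of _ "xs @ [c]"]) (simp add: walk_snoc)
qed

lemma reach_prepend:
  assumes "a \<in> W" "E a b" "reach E W b c"
  shows "reach E W a c"
proof -
  obtain zs where zs: "walk E W zs" "hd zs = b" "last zs = c" using assms(3) unfolding reach_def by blast
  have ne: "zs \<noteq> []" using zs(1) unfolding walk_def by simp
  have "walk E W (a # zs)" using assms(1,2) zs ne by (simp add: walk_Cons)
  moreover have "hd (a # zs) = a" "last (a # zs) = c" using ne zs by auto
  ultimately show ?thesis unfolding reach_def by blast
qed

lemma reach_trans_aux:
  assumes "walk E W xs"
  shows "reach E W (last xs) c \<Longrightarrow> reach E W (hd xs) c"
  using assms
proof (induction xs)
  case Nil then show ?case by (simp add: walk_def)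
next
  case (Cons a ys)
  show ?case
  proof (cases ys)
    case Nil then show ?thesis using Cons.prems by simp
  next
    case (Cons b zs)
    then have w: "walk E W ys" "E a (hd ys)" "a \<in> W" using Cons.prems(2) by (auto simp: walk_Cons)
    have "last (a # ys) = last ys" using \<open>ys = b # zs\<close> by simp
    then have "reach E W (hd ys) c" using Cons.IH w(1) Cons.prems(1) by simp
    then show ?thesis using reach_prepend[of a W E "hd ys" c] w(2,3) by simp
  qed
qed

lemma reach_trans: "reach E W a b \<Longrightarrow> reach E W b c \<Longrightarrow> reach E W a c"
  using reach_trans_aux unfolding reach_def[of E W a b] by metis

lemma reach_sym_aux:
  assumes "\<forall>u v. E u v \<longrightarrow> E v u" "walk E W xs"
  shows "reach E W (last xs) (hd xs)"
  using assms(2)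
proof (induction xs)
  case Nil then show ?case by (simp add: walk_def)
next
  case (Cons a ys)
  show ?case
  proof (cases ys)
    case Nil then show ?thesis using Cons.prems by (simp add: walk_Cons reach_refl)
  next
    case (Cons b zs)
    then have "walk E W ys" "E a (hd ys)" "a \<in> W" using Cons.prems by (auto simp: walk_Cons)
    then have "reach E W (last ys) (hd ys)" "E (hd ys) a" using Cons.IH assms(1) by auto
    then have "reach E W (last ys) a" using reach_step \<open>a \<in> W\<close> by metis
    then show ?thesis using \<open>ys = b # zs\<close> by simp
  qed
qed

lemma reach_sym: "\<forall>u v. E u v \<longrightarrow> E v u \<Longrightarrow> reach E W a b \<Longrightarrow> reach E W b a"
  using reach_sym_aux unfolding reach_def[of E W a b] by metis

lemma ball_reach: "(\<exists>r. w \<in> ball E W r v) \<longleftrightarrow> reach E W v w"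
proof
  assume "\<exists>r. w \<in> ball E W r v"
  then obtain r where "w \<in> ball E W r v" by (elim exE)
  then have "\<exists>xs. walk E W xs \<and> hd xs = v \<and> last xs = w \<and> length xs \<le> Suc r"
    by (simp add: ball_def)
  then show "reach E W v w" unfolding reach_def by (elim exE conjE) (intro exI conjI)
next
  assume "reach E W v w"
  then obtain xs where xs: "walk E W xs" "hd xs = v" "last xs = w" unfolding reach_def by blast
  define n where "n = length xs"
  have "length xs \<le> Suc n" unfolding n_def by simp
  then have "\<exists>ys. walk E W ys \<and> hd ys = v \<and> last ys = w \<and> length ys \<le> Suc n"
    using xs by (intro exI[of _ xs] conjI)
  then have "w \<in> ball E W n v" by (simp add: ball_def)
  then show "\<exists>r. w \<in> ball E W r v" by (rule exI)
qed

lemma components_alt: "components E V X = {C. \<exists>v \<in> V - X. C = {w. reach E (V - X) v w}}"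
  unfolding components_def ball_reach by simp

lemma comp_sub: "H \<in> components E V X \<Longrightarrow> H \<subseteq> V - X"
  unfolding components_alt reach_def using walk_last_in by fastforce

lemma comp_mem: "v \<in> V - X \<Longrightarrow> {w. reach E (V - X) v w} \<in> components E V X \<and> v \<in> {w. reach E (V - X) v w}"
  unfolding components_alt using reach_refl by fastforce

lemma comp_closed:
  assumes "H \<in> components E V X" "a \<in> H" "b \<in> V - X" "E a b"
  shows "b \<in> H"
proof -
  obtain v where v: "H = {w. reach E (V - X) v w}" using assms(1) unfolding components_alt by blast
  have "reach E (V - X) v a" using assms(2) v by simp
  then have "reach E (V - X) v b" using reach_step assms(3,4) by metis
  then show ?thesis using v by simp
qed

lemma comp_disj:
  assumes "\<forall>u v. E u v \<longrightarrow> E v u" "H1 \<in> components E V X" "H2 \<in> components E V X" "x \<in> H1" "x \<in> H2"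
  shows "H1 = H2"
proof -
  obtain v1 where v1: "H1 = {w. reach E (V - X) v1 w}" using assms(2) unfolding components_alt by blast
  obtain v2 where v2: "H2 = {w. reach E (V - X) v2 w}" using assms(3) unfolding components_alt by blast
  have x1: "reach E (V-X) v1 x" and x2: "reach E (V-X) v2 x" using assms(4,5) v1 v2 by auto
  have x2': "reach E (V-X) x v2" using reach_sym[OF assms(1) x2] .
  have x1': "reach E (V-X) x v1" using reach_sym[OF assms(1) x1] .
  have a1: "reach E (V-X) v1 v2" using reach_trans[OF x1 x2'] .
  have a2: "reach E (V-X) v2 v1" using reach_trans[OF x2 x1'] .
  have "\<And>w. reach E (V-X) v1 w \<longleftrightarrow> reach E (V-X) v2 w"
    using reach_trans[OF a1] reach_trans[OF a2] by blast
  then show ?thesis unfolding v1 v2 by blast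
qed

lemma walk_subst:
  assumes g: "graph V E" and X: "X \<subseteq> V" and H: "H \<in> components E V X"
    and bV: "\<beta> ` H \<subseteq> V" and eH: "\<forall>a\<in>H. \<forall>b\<in>H. E a b \<longrightarrow> E (\<beta> a) (\<beta> b)"
    and eX: "\<forall>a\<in>H. \<forall>x\<in>X. E a x \<longrightarrow> E (\<beta> a) x"
    and w: "walk E V xs"
  shows "walk E V (map (\<lambda>v. if v \<in> H then \<beta> v else v) xs)"
proof -
  define f where "f = (\<lambda>v. if v \<in> H then \<beta> v else v)"
  have sym: "\<And>u v. E u v \<Longrightarrow> E v u" using g unfolding graph_def by blast
  have setV: "set xs \<subseteq> V" using w unfolding walk_def by blast
  have ne: "xs \<noteq> []" using w unfolding walk_def by blast
  have fV: "\<And>v. v \<in> V \<Longrightarrow> f v \<in> V" unfolding f_def using bV by auto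
  have s1: "set (map f xs) \<subseteq> V" using setV fV by auto
  have s2: "\<forall>i. Suc i < length (map f xs) \<longrightarrow> E (map f xs ! i) (map f xs ! Suc i)"
  proof (intro allI impI)
    fix i assume i: "Suc i < length (map f xs)"
    then have i': "Suc i < length xs" by simp
    define a where "a = xs ! i"
    define b where "b = xs ! Suc i"
    have ab: "E a b" using w i' unfolding walk_def a_def b_def by blast
    have "a \<in> set xs" "b \<in> set xs" unfolding a_def b_def using i' by simp_all
    then have aV: "a \<in> V" "b \<in> V" using setV by blast+
    have goal: "E (f a) (f b)"
    proof (cases "a \<in> H")
      case True
      show ?thesis
      proof (cases "b \<in> H")
        case True then show ?thesis using \<open>a \<in> H\<close> ab eH unfolding f_def by simp
      next
        case False
        have "b \<in> X"
        proof (rule ccontr)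
          assume "b \<notin> X"
          then have "b \<in> V - X" using aV by blast
          then have "b \<in> H" using comp_closed[OF H \<open>a \<in> H\<close> _ ab] by blast
          then show False using False by contradiction
        qed
        then show ?thesis using \<open>a \<in> H\<close> False ab eX unfolding f_def by simp
      qed
    next
      case False
      show ?thesis
      proof (cases "b \<in> H")
        case True
        have ba: "E b a" using ab sym by blast
        have "a \<in> X"
        proof (rule ccontr)
          assume "a \<notin> X"
          then have "a \<in> V - X" using aV by blast
          then have "a \<in> H" using comp_closed[OF H True _ ba] by blast
          then show False using False by contradiction
        qed
        then have "E (\<beta> b) a" using eX True ba by blast
        then show ?thesis using True False sym unfolding f_def by simp
      next
        case False then show ?thesis using \<open>a \<notin> H\<close> ab unfolding f_def by simp
      qed
    qed
    show "E (map f xs ! i) (map f xs ! Suc i)" using goal i' unfolding a_def b_def by simp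
  qed
  have "walk E V (map f xs)" unfolding walk_def using s1 s2 ne by simp
  then show ?thesis unfolding f_def .
qed

lemma filter_le:
  "\<forall>x\<in>set xs. P (f x) \<longrightarrow> Q x \<Longrightarrow> length (filter P (map f xs)) \<le> length (filter Q xs)"
  by (induction xs) auto

lemma filter_less:
  "\<forall>x\<in>set xs. P (f x) \<longrightarrow> Q x \<Longrightarrow> \<exists>x\<in>set xs. Q x \<and> \<not> P (f x)
   \<Longrightarrow> length (filter P (map f xs)) < length (filter Q xs)"
proof (induction xs)
  case Nil then show ?case by simp
next
  case (Cons a xs)
  have le: "length (filter P (map f xs)) \<le> length (filter Q xs)"
    using Cons.prems(1) filter_le[of xs P f Q] by simp
  show ?case
  proof (cases "Q a \<and> \<not> P (f a)")
    case True then show ?thesis using le by simp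
  next
    case False
    then have "\<exists>x\<in>set xs. Q x \<and> \<not> P (f x)" using Cons.prems by auto
    then have "length (filter P (map f xs)) < length (filter Q xs)" using Cons by simp
    then show ?thesis using Cons.prems(1) by auto
  qed
qed

lemma twin_maps:
  assumes "twin_blocks E V X \<B> H1 H"
  shows "\<exists>\<alpha> \<beta>. \<alpha> ` H1 \<subseteq> H \<and> \<beta> ` H \<subseteq> H1
     \<and> (\<forall>a\<in>H1. \<forall>b\<in>H1. E a b \<longrightarrow> E (\<alpha> a) (\<alpha> b)) \<and> (\<forall>a\<in>H1. \<forall>x\<in>X. E a x \<longrightarrow> E (\<alpha> a) x)
     \<and> (\<forall>a\<in>H. \<forall>b\<in>H. E a b \<longrightarrow> E (\<beta> a) (\<beta> b)) \<and> (\<forall>a\<in>H. \<forall>x\<in>X. E a x \<longrightarrow> E (\<beta> a) x)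
     \<and> (\<forall>y\<in>H. \<alpha> (\<beta> y) = y)"
proof -
  obtain \<alpha> where bij: "bij_betw \<alpha> H1 H" and e1: "\<forall>u\<in>H1. \<forall>w\<in>H1. E u w \<longleftrightarrow> E (\<alpha> u) (\<alpha> w)"
    and e2: "\<forall>u\<in>H1. \<forall>x\<in>X. E u x \<longleftrightarrow> E (\<alpha> u) x"
    using assms unfolding twin_blocks_def by blast
  define \<beta> where "\<beta> = inv_into H1 \<alpha>"
  have im: "\<alpha> ` H1 = H" using bij by (simp add: bij_betw_def)
  have b1: "\<beta> ` H \<subseteq> H1" unfolding \<beta>_def using im by (auto intro: inv_into_into)
  have b2: "\<forall>y\<in>H. \<alpha> (\<beta> y) = y" unfolding \<beta>_def using im by (auto intro: f_inv_into_f)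
  have b3: "\<forall>a\<in>H. \<forall>b\<in>H. E a b \<longrightarrow> E (\<beta> a) (\<beta> b)"
  proof (intro ballI impI)
    fix a b assume "a \<in> H" "b \<in> H" "E a b"
    then have "E (\<alpha> (\<beta> a)) (\<alpha> (\<beta> b))" using b2 by simp
    then show "E (\<beta> a) (\<beta> b)" using e1 b1 \<open>a \<in> H\<close> \<open>b \<in> H\<close> by blast
  qed
  have b4: "\<forall>a\<in>H. \<forall>x\<in>X. E a x \<longrightarrow> E (\<beta> a) x"
  proof (intro ballI impI)
    fix a x assume "a \<in> H" "x \<in> X" "E a x"
    then have "E (\<alpha> (\<beta> a)) x" using b2 by simp
    then show "E (\<beta> a) x" using e2 b1 \<open>a \<in> H\<close> \<open>x \<in> X\<close> by blast
  qed
  have a0: "\<alpha> ` H1 \<subseteq> H" using im by blast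
  have a1: "\<forall>a\<in>H1. \<forall>b\<in>H1. E a b \<longrightarrow> E (\<alpha> a) (\<alpha> b)" using e1 by blast
  have a2: "\<forall>a\<in>H1. \<forall>x\<in>X. E a x \<longrightarrow> E (\<alpha> a) x" using e2 by blast
  show ?thesis
    by (rule exI[of _ \<alpha>], rule exI[of _ \<beta>], intro conjI a0 a1 a2 b1 b2 b3 b4)
qed

lemma reroute:
  assumes g: "graph V E" and X: "X \<subseteq> V" and V': "V' \<subseteq> V" "X \<subseteq> V'"
    and C: "\<forall>H\<in>components E V X.
           H \<subseteq> V'
         \<or> (H \<inter> V' = {} \<and> (\<exists>H1\<in>components E V X. \<exists>H2\<in>components E V X.
               H1 \<noteq> H2 \<and> twin_blocks E V X \<B> H1 H \<and> twin_blocks E V X \<B> H2 H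
               \<and> H1 \<union> H2 \<subseteq> V'))"
    and u: "u \<in> V'" "w \<in> V'"
  shows "walk E V xs \<Longrightarrow> hd xs = u \<Longrightarrow> last xs = w \<Longrightarrow>
     \<exists>ys. walk E V' ys \<and> hd ys = u \<and> last ys = w \<and> length ys = length xs"
proof (induction "length (filter (\<lambda>v. v \<notin> V') xs)" arbitrary: xs rule: less_induct)
  case less
  have setV: "set xs \<subseteq> V" and ne: "xs \<noteq> []" using less.prems(1) unfolding walk_def by blast+
  show ?case
  proof (cases "\<exists>v\<in>set xs. v \<notin> V'")
    case False
    then have "set xs \<subseteq> V'" by blast
    then have "walk E V' xs" using less.prems(1) unfolding walk_def by blast
    then show ?thesis using less.prems(2,3) by blast
  next
    case True
    then obtain v where v: "v \<in> set xs" "v \<notin> V'" by blast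
    have vV: "v \<in> V - X" using v setV V'(2) by blast
    define H where "H = {w. reach E (V - X) v w}"
    have H: "H \<in> components E V X" "v \<in> H" using comp_mem[OF vV] unfolding H_def by blast+
    then have "\<not> H \<subseteq> V'" using v by blast
    then have "H \<inter> V' = {} \<and> (\<exists>H1\<in>components E V X. \<exists>H2\<in>components E V X.
               H1 \<noteq> H2 \<and> twin_blocks E V X \<B> H1 H \<and> twin_blocks E V X \<B> H2 H
               \<and> H1 \<union> H2 \<subseteq> V')" using C H(1) by metis
    then obtain H1 where H1: "twin_blocks E V X \<B> H1 H" "H1 \<subseteq> V'" "H \<inter> V' = {}"
      by blast
    obtain \<alpha> \<beta> where ab: "\<beta> ` H \<subseteq> H1" "\<forall>a\<in>H. \<forall>b\<in>H. E a b \<longrightarrow> E (\<beta> a) (\<beta> b)"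
      "\<forall>a\<in>H. \<forall>x\<in>X. E a x \<longrightarrow> E (\<beta> a) x"
      using twin_maps[OF H1(1)] by blast
    have bV: "\<beta> ` H \<subseteq> V" using ab(1) H1(2) V'(1) by blast
    define f where "f = (\<lambda>v. if v \<in> H then \<beta> v else v)"
    define zs where "zs = map f xs"
    have wz: "walk E V zs" unfolding zs_def f_def
      using walk_subst[OF g X H(1) bV ab(2) ab(3) less.prems(1)] .
    have "u \<notin> H" "w \<notin> H" using u H1(3) by blast+
    then have hz: "hd zs = u" "last zs = w" using ne less.prems(2,3) unfolding zs_def f_def
      by (simp_all add: hd_map last_map)
    have fin: "\<And>x. x \<in> H \<Longrightarrow> f x \<in> V'" unfolding f_def using ab(1) H1(2) by auto
    have "length (filter (\<lambda>v. v \<notin> V') (map f xs)) < length (filter (\<lambda>v. v \<notin> V') xs)"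
    proof (rule filter_less)
      show "\<forall>x\<in>set xs. f x \<notin> V' \<longrightarrow> x \<notin> V'"
      proof (intro ballI impI)
        fix x assume "x \<in> set xs" "f x \<notin> V'"
        then show "x \<notin> V'" using fin unfolding f_def by (cases "x \<in> H") auto
      qed
      show "\<exists>x\<in>set xs. x \<notin> V' \<and> \<not> f x \<notin> V'" using v H(2) fin by blast
    qed
    then have "length (filter (\<lambda>v. v \<notin> V') zs) < length (filter (\<lambda>v. v \<notin> V') xs)"
      unfolding zs_def .
    from less.hyps[OF this wz hz]
    obtain ys where "walk E V' ys" "hd ys = u" "last ys = w" "length ys = length zs" by blast
    then show ?thesis unfolding zs_def by auto
  qed
qed

lemma ball_restrict:
  assumes g: "graph V E" and X: "X \<subseteq> V" and V': "V' \<subseteq> V" "X \<subseteq> V'"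
    and C: "\<forall>H\<in>components E V X.
           H \<subseteq> V'
         \<or> (H \<inter> V' = {} \<and> (\<exists>H1\<in>components E V X. \<exists>H2\<in>components E V X.
               H1 \<noteq> H2 \<and> twin_blocks E V X \<B> H1 H \<and> twin_blocks E V X \<B> H2 H
               \<and> H1 \<union> H2 \<subseteq> V'))"
    and u: "u \<in> V'"
  shows "ball E V r u \<inter> V' = ball E V' r u"
proof
  show "ball E V r u \<inter> V' \<subseteq> ball E V' r u"
  proof
    fix w assume "w \<in> ball E V r u \<inter> V'"
    then obtain xs where xs: "walk E V xs" "hd xs = u" "last xs = w" "length xs \<le> Suc r" "w \<in> V'"
      unfolding ball_def by blast
    obtain ys where ys: "walk E V' ys" "hd ys = u" "last ys = w" "length ys = length xs"
      using reroute[OF g X V' C u xs(5) xs(1-3)] by blast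
    have "length ys \<le> Suc r" using ys(4) xs(4) by simp
    then show "w \<in> ball E V' r u" unfolding ball_def using ys(1-3) by blast
  qed
next
  show "ball E V' r u \<subseteq> ball E V r u \<inter> V'"
  proof
    fix w assume "w \<in> ball E V' r u"
    then obtain xs where xs: "walk E V' xs" "hd xs = u" "last xs = w" "length xs \<le> Suc r"
      unfolding ball_def by blast
    have "walk E V xs" using xs(1) V' unfolding walk_def by auto
    moreover have "w \<in> V'" using walk_last_in[OF xs(1)] xs(3) by simp
    ultimately show "w \<in> ball E V r u \<inter> V'" unfolding ball_def using xs by blast
  qed
qed

lemma ball_sub:
  assumes g: "graph V E" and X: "X \<subseteq> V" and V': "V' \<subseteq> V" "X \<subseteq> V'"
    and C: "\<forall>H\<in>components E V X.
           H \<subseteq> V'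
         \<or> (H \<inter> V' = {} \<and> (\<exists>H1\<in>components E V X. \<exists>H2\<in>components E V X.
               H1 \<noteq> H2 \<and> twin_blocks E V X \<B> H1 H \<and> twin_blocks E V X \<B> H2 H
               \<and> H1 \<union> H2 \<subseteq> V'))"
    and u: "u1 \<in> V'" "u2 \<in> V'"
    and s: "ball E V r1 u1 \<inter> V' \<subseteq> ball E V r2 u2 \<inter> V'"
  shows "ball E V r1 u1 \<subseteq> ball E V r2 u2"
proof
  fix w assume w: "w \<in> ball E V r1 u1"
  show "w \<in> ball E V r2 u2"
  proof (cases "w \<in> V'")
    case True then show ?thesis using w s by blast
  next
    case False
    have sym: "\<forall>u v. E u v \<longrightarrow> E v u" using g unfolding graph_def by blast
    obtain xs where xs: "walk E V xs" "hd xs = u1" "last xs = w" "length xs \<le> Suc r1"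
      using w unfolding ball_def by blast
    have vV: "w \<in> V - X" using walk_last_in[OF xs(1)] xs(3) False V' by auto
    define H where "H = {y. reach E (V - X) w y}"
    have H: "H \<in> components E V X" "w \<in> H" using comp_mem[OF vV] H_def by auto
    then have "\<not> H \<subseteq> V'" using False by blast
    then have "H \<inter> V' = {} \<and> (\<exists>H1\<in>components E V X. \<exists>H2\<in>components E V X.
               H1 \<noteq> H2 \<and> twin_blocks E V X \<B> H1 H \<and> twin_blocks E V X \<B> H2 H
               \<and> H1 \<union> H2 \<subseteq> V')" using C H(1) by metis
    then obtain H1 H2 where H12: "H1 \<in> components E V X" "H2 \<in> components E V X" "H1 \<noteq> H2"
      "twin_blocks E V X \<B> H1 H" "twin_blocks E V X \<B> H2 H" "H1 \<union> H2 \<subseteq> V'" "H \<inter> V' = {}"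
      by blast
    have "\<exists>Hi. Hi \<in> components E V X \<and> twin_blocks E V X \<B> Hi H \<and> Hi \<subseteq> V' \<and> u2 \<notin> Hi"
    proof (cases "u2 \<in> H1")
      case True
      then have "u2 \<notin> H2" using comp_disj[OF sym H12(1,2)] H12(3) by blast
      then show ?thesis using H12(2,5,6) by blast
    next
      case False then show ?thesis using H12(1,4,6) by blast
    qed
    then obtain Hi where Hi: "Hi \<in> components E V X" "twin_blocks E V X \<B> Hi H" "Hi \<subseteq> V'" "u2 \<notin> Hi"
      by blast
    obtain \<alpha> \<beta> where ab: "\<alpha> ` Hi \<subseteq> H" "\<beta> ` H \<subseteq> Hi"
      "\<forall>a\<in>Hi. \<forall>b\<in>Hi. E a b \<longrightarrow> E (\<alpha> a) (\<alpha> b)" "\<forall>a\<in>Hi. \<forall>x\<in>X. E a x \<longrightarrow> E (\<alpha> a) x"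
      "\<forall>a\<in>H. \<forall>b\<in>H. E a b \<longrightarrow> E (\<beta> a) (\<beta> b)" "\<forall>a\<in>H. \<forall>x\<in>X. E a x \<longrightarrow> E (\<beta> a) x"
      "\<forall>y\<in>H. \<alpha> (\<beta> y) = y"
      using twin_maps[OF Hi(2)] by blast
    have HV: "H \<subseteq> V" using comp_sub[OF H(1)] by blast
    have bV: "\<beta> ` H \<subseteq> V" using ab(2) Hi(3) V' by blast
    have aV: "\<alpha> ` Hi \<subseteq> V" using ab(1) HV by blast
    define zs where "zs = map (\<lambda>v. if v \<in> H then \<beta> v else v) xs"
    have wz: "walk E V zs" unfolding zs_def
      using walk_subst[OF g X H(1) bV ab(5) ab(6) xs(1)] .
    have ne: "xs \<noteq> []" using xs(1) unfolding walk_def by simp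
    have "u1 \<notin> H" using u H12(7) by auto
    then have hz: "hd zs = u1" "last zs = \<beta> w" using ne xs(2,3) H(2) unfolding zs_def
      by (simp_all add: hd_map last_map)
    have bw: "\<beta> w \<in> V'" using ab(2) Hi(3) H by blast
    have "\<beta> w \<in> ball E V r1 u1" unfolding ball_def using wz hz xs(4) unfolding zs_def
      by (intro CollectI exI[of _ zs]) (simp add: zs_def)
    then have "\<beta> w \<in> ball E V r2 u2" using s bw by blast
    then obtain ys where ys: "walk E V ys" "hd ys = u2" "last ys = \<beta> w" "length ys \<le> Suc r2"
      unfolding ball_def by blast
    define ts where "ts = map (\<lambda>v. if v \<in> Hi then \<alpha> v else v) ys"
    have wt: "walk E V ts" unfolding ts_def
      using walk_subst[OF g X Hi(1) aV ab(3) ab(4) ys(1)] .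
    have ne2: "ys \<noteq> []" using ys(1) unfolding walk_def by simp
    have "\<beta> w \<in> Hi" using ab(2) H by blast
    then have ht: "hd ts = u2" "last ts = w" using ne2 ys(2,3) Hi(4) ab(7) H(2) unfolding ts_def
      by (simp_all add: hd_map last_map)
    show ?thesis unfolding ball_def using wt ht ys(4)
      by (intro CollectI exI[of _ ts]) (simp add: ts_def)
  qed
qed

theorem lemma22:
  fixes V V' X :: "'a set" and E :: "'a \<Rightarrow> 'a \<Rightarrow> bool" and \<B> :: "'a set set"
  assumes "graph V E"
    and "\<forall>B\<in>\<B>. is_ball E V B"
    and "X \<subseteq> V"
    and "V' \<subseteq> V"
    and "X \<subseteq> V'"
    and "\<forall>H\<in>components E V X.
           H \<subseteq> V'
         \<or> (H \<inter> V' = {} \<and> (\<exists>H1\<in>components E V X. \<exists>H2\<in>components E V X.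
               H1 \<noteq> H2 \<and> twin_blocks E V X \<B> H1 H \<and> twin_blocks E V X \<B> H2 H
               \<and> H1 \<union> H2 \<subseteq> V'))"
  shows "(\<forall>B'\<in>{ball E V r u \<inter> V' | r u. ball E V r u \<in> \<B> \<and> u \<in> V'}. is_ball E V' B')
       \<and> (\<exists>f. bij_betw f {B\<in>\<B>. \<exists>u\<in>V'. \<exists>r. B = ball E V r u}
                        {ball E V r u \<inter> V' | r u. ball E V r u \<in> \<B> \<and> u \<in> V'})"
proof
  show "\<forall>B'\<in>{ball E V r u \<inter> V' | r u. ball E V r u \<in> \<B> \<and> u \<in> V'}. is_ball E V' B'"
  proof
    fix B' assume "B' \<in> {ball E V r u \<inter> V' | r u. ball E V r u \<in> \<B> \<and> u \<in> V'}"
    then obtain r u where B': "B' = ball E V r u \<inter> V'" "u \<in> V'" by blast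
    then have "B' = ball E V' r u" using ball_restrict[OF assms(1,3,4,5,6) B'(2)] by simp
    then show "is_ball E V' B'" unfolding is_ball_def using B'(2) by blast
  qed
next
  show "\<exists>f. bij_betw f {B\<in>\<B>. \<exists>u\<in>V'. \<exists>r. B = ball E V r u}
                        {ball E V r u \<inter> V' | r u. ball E V r u \<in> \<B> \<and> u \<in> V'}"
  proof (intro exI[of _ "\<lambda>B. B \<inter> V'"] bij_betw_imageI)
    show "inj_on (\<lambda>B. B \<inter> V') {B\<in>\<B>. \<exists>u\<in>V'. \<exists>r. B = ball E V r u}"
    proof (rule inj_onI)
      fix B1 B2 assume b1: "B1 \<in> {B\<in>\<B>. \<exists>u\<in>V'. \<exists>r. B = ball E V r u}"
        and b2: "B2 \<in> {B\<in>\<B>. \<exists>u\<in>V'. \<exists>r. B = ball E V r u}" and eq: "B1 \<inter> V' = B2 \<inter> V'"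
      obtain u1 r1 where 1: "u1 \<in> V'" "B1 = ball E V r1 u1" using b1 by blast
      obtain u2 r2 where 2: "u2 \<in> V'" "B2 = ball E V r2 u2" using b2 by blast
      show "B1 = B2"
        using ball_sub[OF assms(1,3,4,5,6) 1(1) 2(1), of r1 r2]
          ball_sub[OF assms(1,3,4,5,6) 2(1) 1(1), of r2 r1] eq 1 2 by auto
    qed
    show "(\<lambda>B. B \<inter> V') ` {B\<in>\<B>. \<exists>u\<in>V'. \<exists>r. B = ball E V r u}
        = {ball E V r u \<inter> V' | r u. ball E V r u \<in> \<B> \<and> u \<in> V'}"
    proof
      show "(\<lambda>B. B \<inter> V') ` {B\<in>\<B>. \<exists>u\<in>V'. \<exists>r. B = ball E V r u}
        \<subseteq> {ball E V r u \<inter> V' | r u. ball E V r u \<in> \<B> \<and> u \<in> V'}" by force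
      show "{ball E V r u \<inter> V' | r u. ball E V r u \<in> \<B> \<and> u \<in> V'} \<subseteq>
        (\<lambda>B. B \<inter> V') ` {B\<in>\<B>. \<exists>u\<in>V'. \<exists>r. B = ball E V r u}" by force
    qed
  qed
qed

end
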